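(* (i) For $\alpha\in[0,1)$, $R_{\mathcal{S}^*_{Ne}}(\mathcal{BS}^*(\alpha))=\dfrac{4}{3+\sqrt{9+16\alpha}}$. (ii) For $\alpha\in[0,1/3]$, $R_{\mathcal{S}^*_{Ne}}(\mathcal{S}^*_L(\alpha))=\dfrac{4(2-3\alpha)}{9(1-\alpha)^2}$; in particular $R_{\mathcal{S}^*_{Ne}}(\mathcal{S}^*_L)=8/9$. (iii) For $\alpha\in[0,(3e-5)/(3e-3)]$, $R_{\mathcal{S}^*_{Ne}}(\mathcal{S}^*_{\alpha,e})=\log\dfrac{5-3\alpha}{3-3\alpha}$; in particular $R_{\mathcal{S}^*_{Ne}}(\mathcal{S}^*_e)=\log(5/3)$. Each radius is sharp, i.e. it is the exact value of the radius.
   Context: $\mathbb{D}=\{|z|<1\}$, $\mathbb{D}_r=\{|z|<r\}$. $\mathcal{A}$ is the class of analytic $f$ on $\mathbb{D}$ with $f(0)=0$, $f'(0)=1$; for $f\in\mathcal{A}$ let $\mathcal{Q}_f(z)=zf'(z)/f(z)$. For analytic $F,G$ on $\mathbb{D}$, $F\prec G$ means $F=G\circ w$ for some analytic $w:\mathbb{D}\to\mathbb{D}$ with $w(0)=0$. For analytic $\varphi$ on $\mathbb{D}$, $\mathcal{S}^*(\varphi)=\{f\in\mathcal{A}:\mathcal{Q}_f\prec\varphi\}$. Let $\varphi_{Ne}(z)=1+z-z^3/3$ (univalent on $\mathbb{D}$), $\Omega_{Ne}=\varphi_{Ne}(\mathbb{D})$, $\mathcal{S}^*_{Ne}=\mathcal{S}^*(\varphi_{Ne})$.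 For $\mathcal{G}\subset\mathcal{A}$, $R_{\mathcal{S}^*_{Ne}}(\mathcal{G})$ is the largest $\rho\in(0,1]$ such that $\mathcal{Q}_f(\mathbb{D}_\rho)\subseteq\Omega_{Ne}$ for all $f\in\mathcal{G}$ (equivalently $r^{-1}f(rz)\in\mathcal{S}^*_{Ne}$ for all $f\in\mathcal{G}$, $0<r\le\rho$). Classes (with $0\le\alpha<1$, principal branch of the square root): $\mathcal{BS}^*(\alpha)=\mathcal{S}^*\big(1+\frac{z}{1-\alpha z^2}\big)$; $\mathcal{S}^*_L(\alpha)=\mathcal{S}^*\big(\alpha+(1-\alpha)\sqrt{1+z}\big)$, $\mathcal{S}^*_L=\mathcal{S}^*_L(0)$; $\mathcal{S}^*_{\alpha,e}=\mathcal{S}^*\big(\alpha+(1-\alpha)e^z\big)$, $\mathcal{S}^*_e=\mathcal{S}^*_{0,e}$. *)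

theory Defs
  imports "HOL-Analysis.Analysis"
begin

definition classA :: "(complex \<Rightarrow> complex) set" where
  "classA = {f. f holomorphic_on ball 0 1 \<and> f 0 = 0 \<and> deriv f 0 = 1}"

text \<open>Q_f(z) = z f'(z)/f(z), with its removable value 1 at z = 0 (since f(0)=0, f'(0)=1).\<close>
definition Qf :: "(complex \<Rightarrow> complex) \<Rightarrow> complex \<Rightarrow> complex" where
  "Qf f z = (if z = 0 then 1 else z * deriv f z / f z)"

definition subord :: "(complex \<Rightarrow> complex) \<Rightarrow> (complex \<Rightarrow> complex) \<Rightarrow> bool" where
  "subord F G \<longleftrightarrow> (\<exists>w. w holomorphic_on ball 0 1 \<and> w ` ball 0 1 \<subseteq> ball 0 1 \<and> w 0 = 0
       \<and> (\<forall>z\<in>ball 0 1. F z = G (w z)))"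

definition Sstar :: "(complex \<Rightarrow> complex) \<Rightarrow> (complex \<Rightarrow> complex) set" where
  "Sstar \<phi> = {f \<in> classA. subord (Qf f) \<phi>}"

definition phiNe :: "complex \<Rightarrow> complex" where
  "phiNe z = 1 + z - z ^ 3 / 3"

definition OmegaNe :: "complex set" where
  "OmegaNe = phiNe ` ball 0 1"

definition R_Ne :: "(complex \<Rightarrow> complex) set \<Rightarrow> real" where
  "R_Ne G = (GREATEST \<rho>. \<rho> \<in> {0<..1} \<and> (\<forall>f\<in>G. Qf f ` ball 0 \<rho> \<subseteq> OmegaNe))"

definition BSstar :: "real \<Rightarrow> (complex \<Rightarrow> complex) set" where
  "BSstar \<alpha> = Sstar (\<lambda>z. 1 + z / (1 - of_real \<alpha> * z ^ 2))"

definition SLstar :: "real \<Rightarrow> (complex \<Rightarrow> complex) set" where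
  "SLstar \<alpha> = Sstar (\<lambda>z. of_real \<alpha> + of_real (1 - \<alpha>) * csqrt (1 + z))"

definition Sestar :: "real \<Rightarrow> (complex \<Rightarrow> complex) set" where
  "Sestar \<alpha> = Sstar (\<lambda>z. of_real \<alpha> + of_real (1 - \<alpha>) * exp z)"

end

theory Submission
  imports Defs "HOL-Complex_Analysis.Complex_Analysis"
begin

lemma disk_in_Omega:
  assumes "norm (w - 1) < 2/3" shows "w \<in> OmegaNe"
proof -
  define c where "c = w - 1"
  define T where "T = (\<lambda>z::complex. c + z^3/3)"
  have bnd: "norm (T z) \<le> norm c + 1/3" if "norm z \<le> 1" for z
  proof -
    have "norm (z^3) \<le> 1" using that by (simp add: norm_power power_le_one)
    hence "norm (z^3/3) \<le> 1/3" by (simp add: norm_divide)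
    thus ?thesis unfolding T_def by (smt (verit) norm_triangle_ineq)
  qed
  have "continuous_on (cball 0 1) T" unfolding T_def by (intro continuous_intros) auto
  moreover have "T \<in> cball (0::complex) 1 \<rightarrow> cball 0 1"
  proof (rule Pi_I)
    fix z :: complex assume "z \<in> cball 0 1"
    hence "norm (T z) \<le> norm c + 1/3" using bnd by simp
    thus "T z \<in> cball 0 1" using assms unfolding c_def by simp
  qed
  ultimately obtain z where z: "z \<in> cball 0 1" "T z = z"
    using brouwer_ball[where f=T and e=1 and a=0] by auto
  have "norm z < 1" using bnd[of z] z assms unfolding c_def by (simp add: dist_norm)
  moreover have "phiNe z = w" using z(2) unfolding phiNe_def T_def c_def by (simp add: algebra_simps)
  ultimately show ?thesis unfolding OmegaNe_def by force
qed

lemma third_notin: "(1/3::complex) \<notin> OmegaNe"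
proof
  assume "1/3 \<in> OmegaNe"
  then obtain z :: complex where z: "norm z < 1" "1 + z - z^3/3 = 1/3" unfolding OmegaNe_def phiNe_def by auto
  have "(z+1)^2*(z-2) = -3*((1 + z - z^3/3) - 1/3)"
    by (simp add: field_simps power2_eq_square power3_eq_cube)
  hence "(z+1)^2*(z-2) = 0" using z(2) by simp
  hence "z = -1 \<or> z = 2" by (auto simp: eq_neg_iff_add_eq_0)
  thus False using z(1) by auto
qed

lemma fivethird_notin: "(5/3::complex) \<notin> OmegaNe"
proof
  assume "5/3 \<in> OmegaNe"
  then obtain z :: complex where z: "norm z < 1" "1 + z - z^3/3 = 5/3" unfolding OmegaNe_def phiNe_def by auto
  have "(z-1)^2*(z+2) = -3*((1 + z - z^3/3) - 5/3)"
    by (simp add: field_simps power2_eq_square power3_eq_cube)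
  hence "(z-1)^2*(z+2) = 0" using z(2) by simp
  hence "z = 1 \<or> z = -2" by (auto simp: eq_neg_iff_add_eq_0)
  thus False using z(1) by auto
qed

lemma extremal:
  assumes hol: "\<phi> holomorphic_on ball 0 1" and phi0: "\<phi> 0 = 1"
  obtains f where "f \<in> classA" "\<forall>z\<in>ball 0 1. Qf f z = \<phi> z"
proof -
  define h where "h = (\<lambda>z. if z = 0 then deriv \<phi> 0 else (\<phi> z - \<phi> 0) / (z - 0))"
  have hh: "h holomorphic_on ball 0 1" unfolding h_def
    by (rule pole_lemma[OF hol]) (simp add: interior_open)
  obtain g where g: "\<And>x. x \<in> ball 0 1 \<Longrightarrow> (g has_field_derivative h x) (at x within ball 0 1)"
    using holomorphic_convex_primitive'[OF convex_ball open_ball hh] by blast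
  have g': "(g has_field_derivative h x) (at x)" if "x \<in> ball 0 1" for x
    using g[OF that] at_within_open[OF that open_ball] by simp
  define f where "f = (\<lambda>z. z * exp (g z - g 0))"
  have fd: "(f has_field_derivative (exp (g x - g 0) + x * (h x * exp (g x - g 0)))) (at x)"
    if "x \<in> ball 0 1" for x
    unfolding f_def by (rule derivative_eq_intros g'[OF that] refl | simp)+
  have holf: "f holomorphic_on ball 0 1"
  proof -
    have "\<forall>x\<in>ball 0 1. \<exists>f'. (f has_field_derivative f') (at x)" using fd by blast
    thus ?thesis by (simp add: holomorphic_on_open)
  qed
  have df: "deriv f x = exp (g x - g 0) + x * (h x * exp (g x - g 0))" if "x \<in> ball 0 1" for x
    using DERIV_imp_deriv[OF fd[OF that]] .
  have "f \<in> classA" unfolding classA_def using holf df[of 0] by (simp add: f_def)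
  moreover have "Qf f z = \<phi> z" if "z \<in> ball 0 1" for z
  proof (cases "z = 0")
    case True thus ?thesis using phi0 by (simp add: Qf_def)
  next
    case False
    thus ?thesis using df[OF that] phi0 by (simp add: Qf_def f_def h_def field_simps)
  qed
  ultimately show ?thesis using that by blast
qed

lemma R_generic:
  assumes hol: "\<phi> holomorphic_on ball 0 1" and phi0: "\<phi> 0 = 1" and r: "0 < r" "r \<le> 1"
   and inner: "\<And>u. norm u < r \<Longrightarrow> norm (\<phi> u - 1) < 2/3"
   and sharp: "r < 1 \<Longrightarrow> \<exists>z. norm z = r \<and> \<phi> z \<notin> OmegaNe"
  shows "R_Ne (Sstar \<phi>) = r"
  unfolding R_Ne_def
proof (rule Greatest_equality)
  have "Qf f ` ball 0 r \<subseteq> OmegaNe" if f: "f \<in> Sstar \<phi>" for f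
  proof
    fix y assume "y \<in> Qf f ` ball 0 r"
    then obtain z where z: "norm z < r" "y = Qf f z" by auto
    obtain w where w: "w holomorphic_on ball 0 1" "w ` ball 0 1 \<subseteq> ball 0 1" "w 0 = 0"
      "\<forall>z\<in>ball 0 1. Qf f z = \<phi> (w z)"
      using f unfolding Sstar_def subord_def by blast
    have z1: "norm z < 1" using z r by simp
    have "norm (w z) \<le> norm z"
      by (rule Schwarz_Lemma(1)[OF w(1) w(3)]) (use w(2) z1 in \<open>auto simp: image_subset_iff\<close>)
    hence "norm (\<phi> (w z) - 1) < 2/3" using inner z by simp
    thus "y \<in> OmegaNe" using disk_in_Omega w(4) z z1 by simp
  qed
  thus "r \<in> {0<..1} \<and> (\<forall>f\<in>Sstar \<phi>. Qf f ` ball 0 r \<subseteq> OmegaNe)" using r by auto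
next
  fix \<rho> assume H: "\<rho> \<in> {0<..1} \<and> (\<forall>f\<in>Sstar \<phi>. Qf f ` ball 0 \<rho> \<subseteq> OmegaNe)"
  show "\<rho> \<le> r"
  proof (rule ccontr)
    assume "\<not> \<rho> \<le> r"
    hence r1: "r < 1" "r < \<rho>" using H by auto
    obtain z where z: "norm z = r" "\<phi> z \<notin> OmegaNe" using sharp r1 by blast
    obtain f where f: "f \<in> classA" "\<forall>z\<in>ball 0 1. Qf f z = \<phi> z" using extremal[OF hol phi0] by blast
    have "f \<in> Sstar \<phi>" unfolding Sstar_def subord_def
      using f by (intro CollectI conjI exI[of _ "\<lambda>z. z"]) auto
    moreover have "z \<in> ball 0 \<rho>" using z r1 by simp
    ultimately have "Qf f z \<in> OmegaNe" using H by blast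
    thus False using f z r1 by simp
  qed
qed


lemma norm_exp_minus_1: "norm (exp z - 1) \<le> exp (norm z) - 1" for z :: complex
proof -
  define f where "f = (\<lambda>n. z ^ n /\<^sub>R fact n)"
  define g where "g = (\<lambda>n. norm z ^ n /\<^sub>R fact n)"
  have "f sums exp z" unfolding f_def by (rule exp_converges)
  hence s1: "(\<lambda>n. f (Suc n)) sums (exp z - 1)"
    by (subst sums_Suc_iff) (simp add: f_def)
  have "g sums exp (norm z)" unfolding g_def by (rule exp_converges)
  hence s2: "(\<lambda>n. g (Suc n)) sums (exp (norm z) - 1)"
    by (subst sums_Suc_iff) (simp add: g_def)
  have ng: "norm (f (Suc n)) = g (Suc n)" for n
    by (simp add: f_def g_def norm_power norm_mult)
  have "norm (exp z - 1) = norm (\<Sum>n. f (Suc n))" using sums_unique[OF s1] by simp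
  also have "\<dots> \<le> (\<Sum>n. norm (f (Suc n)))"
    by (rule summable_norm) (use s2 ng in \<open>simp add: sums_summable\<close>)
  also have "\<dots> = exp (norm z) - 1" using sums_unique[OF s2] ng by simp
  finally show ?thesis .
qed

lemma BS_case:
  assumes a0: "0 \<le> \<alpha>" and a1: "\<alpha> < 1"
  shows "R_Ne (BSstar \<alpha>) = 4 / (3 + sqrt (9 + 16 * \<alpha>))"
proof -
  define q where "q = sqrt (9 + 16 * \<alpha>)"
  define r where "r = 4 / (3 + q)"
  have q3: "q \<ge> 3" unfolding q_def using a0 by (simp add: real_le_rsqrt)
  have qsq: "q^2 = 9 + 16 * \<alpha>" unfolding q_def using a0 by simp
  have rpos: "0 < r" and r1: "r \<le> 1" unfolding r_def using q3 by auto
  have key: "2 * \<alpha> * r^2 + 3 * r - 2 = 0"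
  proof -
    have rq: "r * (3 + q) = 4" unfolding r_def using q3 by (simp add: field_simps)
    have "(2 * \<alpha> * r^2 + 3 * r - 2) * (3+q)^2
          = 2 * \<alpha> * (r * (3+q))^2 + 3 * (r * (3+q)) * (3+q) - 2 * (3+q)^2"
      by (simp add: algebra_simps power2_eq_square)
    also have "\<dots> = 32 * \<alpha> + 18 - 2 * q^2" unfolding rq by (simp add: algebra_simps power2_eq_square)
    also have "\<dots> = 0" using qsq by simp
    finally show ?thesis using q3 by simp
  qed
  define \<phi> where "\<phi> = (\<lambda>z::complex. 1 + z / (1 - of_real \<alpha> * z ^ 2))"
  have den: "norm (1 - of_real \<alpha> * u^2) \<ge> 1 - \<alpha> * norm u ^ 2" for u :: complex
  proof -
    have "norm (of_real \<alpha> * u^2) = \<alpha> * norm u ^ 2" using a0 by (simp add: norm_mult norm_power)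
    thus ?thesis by (smt (verit) norm_triangle_ineq2 norm_one)
  qed
  have dnz: "1 - of_real \<alpha> * u^2 \<noteq> 0" if "norm u < 1" for u :: complex
  proof -
    have "norm u ^ 2 < 1" using that by (simp add: power_less_one_iff abs_less_iff)
    hence "\<alpha> * norm u ^ 2 < 1" using a0 a1 by (smt (verit) mult_le_cancel_left1 norm_ge_zero zero_le_power2 mult_left_le_one_le)
    thus ?thesis using den[of u] by auto
  qed
  have hol: "\<phi> holomorphic_on ball 0 1" unfolding \<phi>_def
    by (intro holomorphic_intros) (use dnz in auto)
  have phi0: "\<phi> 0 = 1" by (simp add: \<phi>_def)
  have inner: "norm (\<phi> u - 1) < 2/3" if u: "norm u < r" for u
  proof -
    define s where "s = norm u"
    have s0: "0 \<le> s" and sr: "s < r" using u by (auto simp: s_def)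
    have "\<alpha> * s^2 \<le> \<alpha> * r^2" using s0 sr a0 by (intro mult_left_mono power_mono) auto
    hence lt: "2 * \<alpha> * s^2 + 3 * s < 2" using key sr by linarith
    hence dpos: "1 - \<alpha> * s^2 > 0" using s0 by linarith
    have "norm (\<phi> u - 1) = s / norm (1 - of_real \<alpha> * u^2)"
      by (simp add: \<phi>_def s_def norm_divide)
    also have "\<dots> \<le> s / (1 - \<alpha> * s^2)"
      using den[of u] dpos s0 unfolding s_def by (intro divide_left_mono) (auto intro!: mult_pos_pos)
    also have "\<dots> < 2/3" using lt dpos by (simp add: divide_less_eq)
    finally show ?thesis .
  qed
  have sharp: "\<exists>z. norm z = r \<and> \<phi> z \<notin> OmegaNe"
  proof (intro exI conjI)
    show "norm (- complex_of_real r) = r" using rpos by simp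
    have "1 - \<alpha> * r^2 = 3 * r / 2" using key by simp
    have d: "1 - of_real \<alpha> * (- complex_of_real r)^2 = of_real (1 - \<alpha> * r^2)" by simp
    have "\<phi> (- complex_of_real r) = 1 + (- complex_of_real r) / of_real (1 - \<alpha> * r^2)"
      unfolding \<phi>_def d by simp
    also have "\<dots> = 1 + (- complex_of_real r) / of_real (3 * r / 2)"
      using \<open>1 - \<alpha> * r^2 = 3 * r / 2\<close> by (simp only:)
    also have "\<dots> = 1/3" using rpos by (simp add: field_simps)
    finally show "\<phi> (- complex_of_real r) \<notin> OmegaNe" using third_notin by (simp only:) simp
  qed
  have "R_Ne (Sstar \<phi>) = r" by (rule R_generic[OF hol phi0 rpos r1 inner]) (use sharp in auto)
  thus ?thesis unfolding BSstar_def \<phi>_def r_def q_def .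
qed


lemma SL_case:
  assumes a0: "0 \<le> \<alpha>" and a1: "\<alpha> \<le> 1/3"
  shows "R_Ne (SLstar \<alpha>) = 4 * (2 - 3 * \<alpha>) / (9 * (1 - \<alpha>) ^ 2)"
proof -
  define t where "t = (1 - 3*\<alpha>) / (3 * (1 - \<alpha>))"
  define r where "r = 4 * (2 - 3 * \<alpha>) / (9 * (1 - \<alpha>) ^ 2)"
  have t0: "0 \<le> t" unfolding t_def using a1 by simp
  have r_eq: "1 - r = t^2"
  proof -
    have d: "1 - \<alpha> \<noteq> 0" using a1 by simp
    have rr: "r * (9 * (1 - \<alpha>) ^ 2) = 4 * (2 - 3 * \<alpha>)" unfolding r_def using d by simp
    have tt: "t * (3 * (1 - \<alpha>)) = 1 - 3 * \<alpha>" unfolding t_def using d by simp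
    have "(1 - r - t^2) * (9 * (1 - \<alpha>) ^ 2)
        = 9 * (1 - \<alpha>) ^ 2 - r * (9 * (1 - \<alpha>) ^ 2) - (t * (3 * (1 - \<alpha>)))^2"
      by (simp add: algebra_simps power2_eq_square)
    also have "\<dots> = 0" unfolding rr tt by (simp add: algebra_simps power2_eq_square)
    finally show ?thesis using d by simp
  qed
  have rpos: "0 < r" unfolding r_def using a1 by simp
  have r1: "r \<le> 1" using r_eq by (smt (verit) zero_le_power2)
  have tkey: "(1 - \<alpha>) * (1 - t) = 2/3" unfolding t_def using a1 by (simp add: field_simps)
  define \<phi> where "\<phi> = (\<lambda>z::complex. of_real \<alpha> + of_real (1 - \<alpha>) * csqrt (1 + z))"
  have hol: "\<phi> holomorphic_on ball 0 1" unfolding \<phi>_def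
  proof (intro holomorphic_intros)
    fix z :: complex assume "z \<in> ball 0 1"
    hence "norm z < 1" by simp
    hence "Re (1 + z) > 0" using abs_Re_le_cmod[of z] by simp
    thus "1 + z \<notin> \<real>\<^sub>\<le>\<^sub>0" by (auto simp: nonpos_Reals_def dest!: arg_cong[where f=Re])
  qed
  have phi0: "\<phi> 0 = 1" by (simp add: \<phi>_def flip: of_real_add)
  have inner: "norm (\<phi> u - 1) < 2/3" if u: "norm u < r" for u
  proof -
    define s where "s = norm u"
    define c where "c = csqrt (1 + u)"
    define v where "v = sqrt (1 - s)"
    have s0: "0 \<le> s" and sr: "s < r" using u by (auto simp: s_def)
    have v0: "0 \<le> v" and vsq: "v^2 = 1 - s" unfolding v_def using sr r1 by auto
    have "v^2 > t^2" using vsq r_eq sr by simp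
    hence vt: "v > t" using v0 t0 by (smt (verit) power_mono)
    have "Re (1 + u) \<ge> 1 - s" using abs_Re_le_cmod[of u] by (simp add: s_def)
    moreover have "cmod (1 + u) \<ge> 1 - s" using norm_triangle_ineq2[of 1 "-u"] by (simp add: s_def)
    ultimately have "(cmod (1 + u) + Re (1 + u)) / 2 \<ge> 1 - s" by simp
    hence "Re c \<ge> v" unfolding c_def v_def by (simp only: csqrt.sel) (rule real_sqrt_le_mono)
    hence "norm (c + 1) \<ge> 1 + v" using complex_Re_le_cmod[of "c+1"] by simp
    moreover have "norm (c - 1) * norm (c + 1) = s"
    proof -
      have "(c - 1) * (c + 1) = u" unfolding c_def by (simp add: algebra_simps power2_eq_square[symmetric])
      thus ?thesis by (simp add: s_def flip: norm_mult)
    qed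
    ultimately have "norm (c - 1) * (1 + v) \<le> s"
      by (smt (verit) mult_left_mono norm_ge_zero)
    hence "norm (c - 1) \<le> s / (1 + v)" using v0 by (simp add: field_simps)
    also have "s / (1 + v) = 1 - v"
    proof -
      have "s = (1 - v) * (1 + v)" using vsq by (simp add: algebra_simps power2_eq_square)
      thus ?thesis using v0 by simp
    qed
    finally have nc: "norm (c - 1) \<le> 1 - v" .
    have "\<phi> u - 1 = of_real (1 - \<alpha>) * (c - 1)" unfolding \<phi>_def c_def by (simp add: algebra_simps)
    hence "norm (\<phi> u - 1) = (1 - \<alpha>) * norm (c - 1)" using a1 by (simp add: norm_mult del: of_real_diff)
    also have "\<dots> \<le> (1 - \<alpha>) * (1 - v)" using nc a1 by (intro mult_left_mono) auto
    also have "\<dots> < (1 - \<alpha>) * (1 - t)" using vt a1 by simp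
    finally show ?thesis using tkey by simp
  qed
  have sharp: "\<exists>z. norm z = r \<and> \<phi> z \<notin> OmegaNe"
  proof (intro exI conjI)
    show "norm (- complex_of_real r) = r" using rpos by simp
    have "1 + (- complex_of_real r) = of_real (t^2)" using r_eq by (simp flip: r_eq)
    hence "csqrt (1 + (- complex_of_real r)) = of_real t" using t0 by simp
    hence "\<phi> (- complex_of_real r) = of_real (\<alpha> + (1 - \<alpha>) * t)" unfolding \<phi>_def by simp
    also have "\<alpha> + (1 - \<alpha>) * t = 1/3" using tkey by (simp add: algebra_simps)
    finally show "\<phi> (- complex_of_real r) \<notin> OmegaNe" using third_notin by (simp only:) simp
  qed
  have "R_Ne (Sstar \<phi>) = r" by (rule R_generic[OF hol phi0 rpos r1 inner]) (use sharp in auto)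
  thus ?thesis unfolding SLstar_def \<phi>_def r_def .
qed

lemma E_case:
  assumes a0: "0 \<le> \<alpha>" and a1: "\<alpha> \<le> (3 * exp 1 - 5) / (3 * exp 1 - 3)"
  shows "R_Ne (Sestar \<alpha>) = ln ((5 - 3 * \<alpha>) / (3 - 3 * \<alpha>))"
proof -
  have e3: "exp (1::real) > 1" by simp
  have ed: "3 * exp (1::real) - 3 > 0" using e3 by simp
  have al: "\<alpha> * (3 * exp 1 - 3) \<le> 3 * exp 1 - 5" using a1 ed by (simp add: le_divide_eq)
  have a2: "\<alpha> < 1" using al ed by (smt (verit) mult_left_le_one_le mult_le_cancel_right1)
  define K where "K = (5 - 3 * \<alpha>) / (3 - 3 * \<alpha>)"
  define r where "r = ln K"
  have K1: "K > 1" unfolding K_def using a2 by (simp add: field_simps)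
  have Ke: "K \<le> exp 1" unfolding K_def using a2 al by (simp add: field_simps)
  have expr: "exp r = K" unfolding r_def using K1 by simp
  have rpos: "0 < r" unfolding r_def using K1 by simp
  have r1: "r \<le> 1" unfolding r_def using ln_le_cancel_iff[of K "exp 1"] K1 Ke by simp
  have Kkey: "(1 - \<alpha>) * (K - 1) = 2/3" unfolding K_def using a2 by (simp add: field_simps)
  define \<phi> where "\<phi> = (\<lambda>z::complex. of_real \<alpha> + of_real (1 - \<alpha>) * exp z)"
  have hol: "\<phi> holomorphic_on ball 0 1" unfolding \<phi>_def by (intro holomorphic_intros)
  have phi0: "\<phi> 0 = 1" by (simp add: \<phi>_def flip: of_real_add)
  have inner: "norm (\<phi> u - 1) < 2/3" if u: "norm u < r" for u
  proof -
    have "\<phi> u - 1 = of_real (1 - \<alpha>) * (exp u - 1)" unfolding \<phi>_def by (simp add: algebra_simps)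
    hence "norm (\<phi> u - 1) = (1 - \<alpha>) * norm (exp u - 1)" using a2 by (simp add: norm_mult del: of_real_diff)
    also have "\<dots> \<le> (1 - \<alpha>) * (exp (norm u) - 1)" using a2 norm_exp_minus_1[of u]
      by (intro mult_left_mono) auto
    also have "\<dots> < (1 - \<alpha>) * (K - 1)"
    proof -
      have "exp (norm u) < K" using u expr by (metis exp_less_mono)
      thus ?thesis using a2 by simp
    qed
    finally show ?thesis using Kkey by simp
  qed
  have sharp: "\<exists>z. norm z = r \<and> \<phi> z \<notin> OmegaNe"
  proof (intro exI conjI)
    show "norm (complex_of_real r) = r" using rpos by simp
    have "\<phi> (complex_of_real r) = of_real (\<alpha> + (1 - \<alpha>) * K)"
    proof -
      have "exp (complex_of_real r) = of_real K" using expr by (metis exp_of_real)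
      thus ?thesis by (simp add: \<phi>_def)
    qed
    also have "\<alpha> + (1 - \<alpha>) * K = 5/3" using Kkey by (simp add: algebra_simps)
    finally show "\<phi> (complex_of_real r) \<notin> OmegaNe" using fivethird_notin by (simp only:) simp
  qed
  have "R_Ne (Sstar \<phi>) = r" by (rule R_generic[OF hol phi0 rpos r1 inner]) (use sharp in auto)
  thus ?thesis unfolding Sestar_def \<phi>_def r_def K_def .
qed

theorem mainTheorem6:
  shows "(\<forall>\<alpha>::real. 0 \<le> \<alpha> \<and> \<alpha> < 1 \<longrightarrow>
            R_Ne (BSstar \<alpha>) = 4 / (3 + sqrt (9 + 16 * \<alpha>)))
       \<and> (\<forall>\<alpha>::real. 0 \<le> \<alpha> \<and> \<alpha> \<le> 1/3 \<longrightarrow>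
            R_Ne (SLstar \<alpha>) = 4 * (2 - 3 * \<alpha>) / (9 * (1 - \<alpha>) ^ 2))
       \<and> R_Ne (SLstar 0) = 8 / 9
       \<and> (\<forall>\<alpha>::real. 0 \<le> \<alpha> \<and> \<alpha> \<le> (3 * exp 1 - 5) / (3 * exp 1 - 3) \<longrightarrow>
            R_Ne (Sestar \<alpha>) = ln ((5 - 3 * \<alpha>) / (3 - 3 * \<alpha>)))
       \<and> R_Ne (Sestar 0) = ln (5 / 3)"
proof (intro conjI allI impI)
  show "R_Ne (BSstar \<alpha>) = 4 / (3 + sqrt (9 + 16 * \<alpha>))" if "0 \<le> \<alpha> \<and> \<alpha> < 1" for \<alpha>
    using BS_case that by blast
  show "R_Ne (SLstar \<alpha>) = 4 * (2 - 3 * \<alpha>) / (9 * (1 - \<alpha>) ^ 2)" if "0 \<le> \<alpha> \<and> \<alpha> \<le> 1/3" for \<alpha>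
    using SL_case that by blast
  show "R_Ne (SLstar 0) = 8 / 9" using SL_case[of 0] by simp
  show "R_Ne (Sestar \<alpha>) = ln ((5 - 3 * \<alpha>) / (3 - 3 * \<alpha>))"
    if "0 \<le> \<alpha> \<and> \<alpha> \<le> (3 * exp 1 - 5) / (3 * exp 1 - 3)" for \<alpha>
    using E_case that by blast
  have e2: "exp (1::real) \<ge> 2" using exp_ge_add_one_self[of 1] by simp
  hence "0 \<le> (3 * exp 1 - 5) / (3 * exp (1::real) - 3)" by simp
  thus "R_Ne (Sestar 0) = ln (5 / 3)" using E_case[of 0] by simp
qed

end
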